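(* Let $m$ be a positive integer and let $r,\ell,h,p,q$ be nonnegative integers with $\ell\ge 2$ satisfying: (1) $h<2^{\ell-2}$; (2) $rm=p\cdot 2^{\ell+1}+2^{\ell-1}+h$; (3) $(r+1)m\leq p\cdot 2^{\ell+1}+5\cdot 2^{\ell-2}$; (4) $(r+2^{\ell-2})m=q\cdot 2^{\ell+1}+3\cdot 2^{\ell-2}+h$; (5) $\mathbf t_{p+1}\neq\mathbf t_{q+1}$. Then $\langle rm+1,(r+1)m\rangle=\langle (r+2^{\ell-2})m+1,(r+2^{\ell-2}+1)m\rangle$, and consequently $\mathfrak K(m)\leq r+2^{\ell-2}+1$.
   Context: The Thue–Morse word is $\mathbf t=\mathbf t_1\mathbf t_2\cdots$ where $\mathbf t_i\in\{0,1\}$ has the parity of the number of $1$'s in the binary expansion of $i-1$. For positive integers $\alpha\le\beta$, $\langle\alpha,\beta\rangle=\mathbf t_\alpha\mathbf t_{\alpha+1}\cdots\mathbf t_\beta$. A $k$-anti-power is a word $w_1\cdots w_k$ with $w_1,\dots,w_k$ pairwise distinct words of equal length. For a positive integer $m$, $\mathfrak K(m)$ is the smallest positive integer $k$ such that the prefix $\langle 1,km\rangle$ of $\mathbf t$ is not a $k$-anti-power (i.e. the smallest $k$ such that $\langle (k-1)m+1,km\rangle=\langle nm+1,(n+1)m\rangle$ for some $0\le n<k-1$). *)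

theory Defs
  imports Main
begin

fun popcount :: "nat \<Rightarrow> nat" where
  "popcount n = (if n = 0 then 0 else n mod 2 + popcount (n div 2))"

text \<open>Thue--Morse word, 1-indexed: t i (i \<ge> 1) is the parity of popcount (i - 1).\<close>
definition tm :: "nat \<Rightarrow> nat" where
  "tm i = popcount (i - 1) mod 2"

definition factor :: "nat \<Rightarrow> nat \<Rightarrow> nat list" where
  "factor \<alpha> \<beta> = map tm [\<alpha>..<Suc \<beta>]"

text \<open>Smallest positive k such that the prefix <1,km> is not a k-anti-power.\<close>
definition antipow_K :: "nat \<Rightarrow> nat" where
  "antipow_K m = (LEAST k. 0 < k \<and>
      (\<exists>n < k - 1. factor ((k - 1) * m + 1) (k * m) = factor (n * m + 1) ((n + 1) * m)))"

end

theory Submission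
  imports Defs
begin

lemma pc_eq: "popcount n = n mod 2 + popcount (n div 2)"
  by (cases "n = 0") (simp_all add: popcount.simps[of n])

lemma pc0: "popcount 0 = 0" by simp

declare popcount.simps[simp del]

lemma pc_add: "b < 2^n \<Longrightarrow> popcount (a*2^n + b) = popcount a + popcount b"
proof (induction n arbitrary: b)
  case 0 then show ?case by (simp add: pc0)
next
  case (Suc n)
  have "popcount (a*2^Suc n + b) = (a*2^Suc n + b) mod 2 + popcount ((a*2^Suc n + b) div 2)"
    by (rule pc_eq)
  also have "(a*2^Suc n + b) mod 2 = b mod 2" proof -
    have "a*2^Suc n + b = b + 2*(a*2^n)" by simp
    then show ?thesis by (simp only:) simp
  qed
  also have "(a*2^Suc n + b) div 2 = a*2^n + b div 2" by simp
  also have "popcount (a*2^n + b div 2) = popcount a + popcount (b div 2)"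
    using Suc by (intro Suc.IH) auto
  finally show ?case using pc_eq[of b] by simp
qed

lemma pc1: "popcount (Suc 0) = 1" using pc_eq[of 1] by (simp add: pc0)
lemma pc2: "popcount 2 = 1" using pc_eq[of 2] by (simp add: pc1)
lemma pc3: "popcount 3 = 2" using pc_eq[of 3] by (simp add: pc1)
lemma pc4: "popcount 4 = 1" using pc_eq[of 4] by (simp add: pc2)
lemma pc5: "popcount 5 = 2" using pc_eq[of 5] by (simp add: pc2)

lemma core:
  fixes k s :: nat
  assumes "s < 3 * 2^k"
  shows "popcount (2 * 2^k + s) mod 2 \<noteq> popcount (3 * 2^k + s) mod 2"
proof -
  consider "s < 2^k" | "2^k \<le> s" "s < 2*2^k" | "2*2^k \<le> s" by linarith
  then show ?thesis
  proof cases
    case 1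
    then show ?thesis using pc_add[OF 1, of 2] pc_add[OF 1, of 3]
      by (simp add: pc2 pc3 mult.commute) presburger
  next
    case 2
    define t where "t = s - 2^k"
    have t: "t < 2^k" "s = 2^k + t" using 2 by (auto simp: t_def)
    have e1: "2 * 2^k + s = 3 * 2^k + t" "3 * 2^k + s = 4 * 2^k + t" using t by auto
    show ?thesis unfolding e1 using pc_add[OF t(1), of 3] pc_add[OF t(1), of 4]
      by (simp add: pc4 pc3 mult.commute) presburger
  next
    case 3
    define t where "t = s - 2*2^k"
    have t: "t < 2^k" "s = 2*2^k + t" using 3 assms by (auto simp: t_def)
    have e1: "2 * 2^k + s = 4 * 2^k + t" "3 * 2^k + s = 5 * 2^k + t" using t by auto
    show ?thesis unfolding e1 using pc_add[OF t(1), of 4] pc_add[OF t(1), of 5]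
      by (simp add: pc4 pc5 mult.commute) presburger
  qed
qed

theorem lemma1:
  fixes m r l h p q :: nat
  assumes "0 < m" and "2 \<le> l"
    and "h < 2 ^ (l - 2)"
    and "r * m = p * 2 ^ (l + 1) + 2 ^ (l - 1) + h"
    and "(r + 1) * m \<le> p * 2 ^ (l + 1) + 5 * 2 ^ (l - 2)"
    and "(r + 2 ^ (l - 2)) * m = q * 2 ^ (l + 1) + 3 * 2 ^ (l - 2) + h"
    and "tm (p + 1) \<noteq> tm (q + 1)"
  shows "factor (r * m + 1) ((r + 1) * m)
           = factor ((r + 2 ^ (l - 2)) * m + 1) ((r + 2 ^ (l - 2) + 1) * m)
         \<and> antipow_K m \<le> r + 2 ^ (l - 2) + 1"
proof -
  obtain k where lk: "l = k + 2" using assms(2) by (metis add.commute le_Suc_ex)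
  define L where "L = (2::nat)^k"
  have L: "2 ^ (l - 2) = L" "2 ^ (l+1) = 8 * L" "2^(l-1) = 2 * L" "2^(k+3) = 8*L"
    by (simp_all add: lk L_def power_add)
  have Lpos: "L > 0" by (simp add: L_def)
  have pq: "popcount p mod 2 \<noteq> popcount q mod 2" using assms(7) by (simp add: tm_def)
  have eq: "factor (r * m + 1) ((r + 1) * m)
           = factor ((r + L) * m + 1) ((r + L + 1) * m)"
    unfolding factor_def
  proof (rule nth_equalityI)
    show "length (map tm [r * m + 1..<Suc ((r + 1) * m)]) =
          length (map tm [(r + L) * m + 1..<Suc ((r + L + 1) * m)])"
      by (simp add: algebra_simps)
  next
    fix j assume "j < length (map tm [r * m + 1..<Suc ((r + 1) * m)])"
    then have j: "j < m" by (simp only: length_map length_upt) simp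
    define s where "s = h + j"
    have s3: "s < 3 * 2^k" using assms(4,5) j L by (simp add: s_def L_def algebra_simps)
    have x: "r * m + j = p * 2^(k+3) + (2 * 2^k + s)"
      using assms(4) L by (simp add: s_def L_def algebra_simps)
    have y: "(r + L) * m + j = q * 2^(k+3) + (3 * 2^k + s)"
      using assms(6) L by (simp add: s_def L_def algebra_simps)
    have b1: "2 * 2^k + s < 2^(k+3)" using s3 by (simp add: power_add)
    have b2: "3 * 2^k + s < 2^(k+3)" using s3 by (simp add: power_add)
    have "popcount (r * m + j) mod 2 = popcount ((r + L) * m + j) mod 2"
      unfolding x y pc_add[OF b1] pc_add[OF b2]
      using core[OF s3] pq by presburger
    moreover have "map tm [r * m + 1..<Suc ((r + 1) * m)] ! j = tm (r*m + 1 + j)"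
      using j by (simp add: nth_upt del: upt_Suc)
    moreover have "map tm [(r + L) * m + 1..<Suc ((r + L + 1) * m)] ! j = tm ((r+L)*m + 1 + j)"
      using j by (simp add: nth_upt del: upt_Suc)
    ultimately show "map tm [r * m + 1..<Suc ((r + 1) * m)] ! j =
         map tm [(r + L) * m + 1..<Suc ((r + L + 1) * m)] ! j"
      by (simp add: tm_def)
  qed
  have "antipow_K m \<le> r + L + 1"
    unfolding antipow_K_def
  proof (rule Least_le)
    show "0 < r + L + 1 \<and> (\<exists>n < r + L + 1 - 1. factor ((r + L + 1 - 1) * m + 1) ((r + L + 1) * m)
          = factor (n * m + 1) ((n + 1) * m))"
      using eq Lpos by (intro conjI exI[of _ r]) auto
  qed
  then show ?thesis using eq L by simp
qed

end
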